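(* For all $\lambda\in[0,1]$ and $\Delta_1,\Delta_2\in[0,\frac12]$, $C_{\mathrm{SKL}}((\mathrm{BSC}_{\Delta_1}\times\mathrm{BSC}_{\Delta_2})\circ B_{3,\lambda})\le\lambda^2\big(C_{\mathrm{SKL}}(\mathrm{BSC}_{\Delta_1})+C_{\mathrm{SKL}}(\mathrm{BSC}_{\Delta_2})\big)$, and the inequality is strict when $0<\lambda<1$ and $\min\{\Delta_1,\Delta_2\}<\frac12$.
   Context: $\mathrm{BSC}_\Delta:\{\pm\}\to\{\pm\}$ flips the input with probability $\Delta$. $B_{3,\lambda}:\{\pm\}\to\{\pm\}^2$ is the kernel $B_{3,\lambda}(x_1,x_2|y)=\lambda+\frac14(1-\lambda)$ if $x_1=x_2=y$ and $\frac14(1-\lambda)$ otherwise. $\times$ is the tensor product of channels. For a binary-input channel $P$, $C_{\mathrm{SKL}}(P)$ is the SKL information ($f$-information with $f(x)=(x-1)\log x$) between $X\sim\mathrm{Unif}(\{\pm\})$ and the output of $P$; in particular $C_{\mathrm{SKL}}(\mathrm{BSC}_\Delta)=\theta\,\mathrm{arctanh}\,\theta$ with $\theta=1-2\Delta$ (with value $+\infty$ at $\Delta=0$). *)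

theory Defs
  imports Complex_Main "HOL-Library.Extended_Real"
begin

text \<open>Binary alphabet {+,-} is encoded as bool (True = +, False = -).
  A channel from 'a to 'b is a Markov kernel W :: 'a \<Rightarrow> 'b \<Rightarrow> real,
  W x y = probability of output y given input x.\<close>

definition BSC :: "real \<Rightarrow> bool \<Rightarrow> bool \<Rightarrow> real" where
  "BSC \<Delta> y x = (if x = y then 1 - \<Delta> else \<Delta>)"

definition B3 :: "real \<Rightarrow> bool \<Rightarrow> bool \<times> bool \<Rightarrow> real" where
  "B3 lam y x = (if fst x = y \<and> snd x = y then lam + (1 - lam) / 4 else (1 - lam) / 4)"

definition chan_prod :: "('a \<Rightarrow> 'b \<Rightarrow> real) \<Rightarrow> ('c \<Rightarrow> 'd \<Rightarrow> real) \<Rightarrow> 'a \<times> 'c \<Rightarrow> 'b \<times> 'd \<Rightarrow> real" where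
  "chan_prod P Q x y = P (fst x) (fst y) * Q (snd x) (snd y)"

text \<open>Composition K \<circ> B: first apply B, then K.\<close>
definition chan_comp :: "('b::finite \<Rightarrow> 'c \<Rightarrow> real) \<Rightarrow> ('a \<Rightarrow> 'b \<Rightarrow> real) \<Rightarrow> 'a \<Rightarrow> 'c \<Rightarrow> real" where
  "chan_comp K B x z = (\<Sum>w\<in>UNIV. B x w * K w z)"

text \<open>Summand Q * f(P/Q) of an f-divergence with f(t) = (t-1) log t, using the
  conventions f(0) = +\<infinity> and 0 * f(p/0) = 0 when p = 0 (here Q = 0 forces P = 0).\<close>
definition skl_term :: "real \<Rightarrow> real \<Rightarrow> ereal" where
  "skl_term p q = (if q = 0 then 0 else if p = 0 then \<infinity> else ereal ((p - q) * ln (p / q)))"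

text \<open>SKL information between X ~ Unif({+,-}) and the output of P:
  D_SKL(P_{XY} || P_X \<otimes> P_Y).\<close>
definition C_SKL :: "(bool \<Rightarrow> 'b::finite \<Rightarrow> real) \<Rightarrow> ereal" where
  "C_SKL P = (\<Sum>x\<in>UNIV. \<Sum>y\<in>UNIV.
      skl_term (P x y / 2) ((1/2) * (\<Sum>x'\<in>UNIV. P x' y / 2)))"

end

theory Submission
  imports Defs
begin


lemma frac_diff1:
  fixes A a b :: real
  assumes "0 < 1 - a + a*A" "0 < 1 - b + b*A"
  shows "(A-1)/(1-b+b*A) - (A-1)/(1-a+a*A) = - ((b-a) * ((A-1)^2/((1-a+a*A)*(1-b+b*A))))"
proof -
  have "(A-1)/(1-b+b*A) - (A-1)/(1-a+a*A) = ((A-1)*(1-a+a*A) - (A-1)*(1-b+b*A))/((1-a+a*A)*(1-b+b*A))"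
    using assms by (simp add: field_simps)
  also have "(A-1)*(1-a+a*A) - (A-1)*(1-b+b*A) = - ((b-a)*(A-1)^2)"
    by (simp add: algebra_simps power2_eq_square)
  finally show ?thesis by (metis minus_divide_left times_divide_eq_right)
qed

lemma Jd_diff:
  fixes A B a b :: real
  assumes "0 < 1 - a + a*A" "0 < 1 - b + b*A" "0 < 1 - a + a*B" "0 < 1 - b + b*B"
  shows "((A-1)/(1-b+b*A) - (B-1)/(1-b+b*B)) - ((A-1)/(1-a+a*A) - (B-1)/(1-a+a*B))
     = (b-a) * ((B-1)^2/((1-a+a*B)*(1-b+b*B)) - (A-1)^2/((1-a+a*A)*(1-b+b*A)))"
  unfolding right_diff_distrib[of "b-a"]
  using frac_diff1[OF assms(1,2)] frac_diff1[OF assms(3,4)] by linarith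

definition Lf :: "real \<Rightarrow> real \<Rightarrow> real \<Rightarrow> real" where
  "Lf A B l = \<bar>B-1\<bar>*(1-l+l*A) - \<bar>A-1\<bar>*(1-l+l*B)"

lemma Lf_mono:
  assumes "B \<le> A" "a \<le> b" shows "Lf A B a \<le> Lf A B b"
proof -
  have "Lf A B b - Lf A B a = (b-a) * (\<bar>B-1\<bar>*(A-1) - \<bar>A-1\<bar>*(B-1))"
    by (simp add: Lf_def algebra_simps)
  moreover have "\<bar>B-1\<bar>*(A-1) - \<bar>A-1\<bar>*(B-1) \<ge> 0"
  proof (cases "A \<ge> 1")
    case True
    have "(A-1)*(1-B) \<ge> 0" if "B < 1" using True that by simp
    then show ?thesis using True by (cases "B \<ge> 1") (auto simp: abs_if algebra_simps intro: mult_nonneg_nonneg)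
  next
    case False
    then show ?thesis using assms by (auto simp: abs_if algebra_simps)
  qed
  ultimately show ?thesis using assms(2) by (metis diff_ge_0_iff_ge mult_nonneg_nonneg)
qed

lemma Lf_strict_mono:
  assumes "B < 1" "1 < A" "a < b" shows "Lf A B a < Lf A B b"
proof -
  have "Lf A B b - Lf A B a = (b-a) * (\<bar>B-1\<bar>*(A-1) - \<bar>A-1\<bar>*(B-1))"
    by (simp add: Lf_def algebra_simps)
  moreover have "\<bar>B-1\<bar>*(A-1) - \<bar>A-1\<bar>*(B-1) = 2*((1-B)*(A-1))"
    using assms by (simp add: abs_if algebra_simps)
  moreover have "(1-B)*(A-1) > 0" using assms by simp
  ultimately show ?thesis using assms(3) by (metis diff_gt_0_iff_gt mult_pos_pos zero_less_numeral)
qed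

lemma pos_lin: "0 < A \<Longrightarrow> 0 \<le> l \<Longrightarrow> l \<le> 1 \<Longrightarrow> 0 < 1 - l + l*(A::real)"
proof -
  assume "0 < A" "0 \<le> l" "l \<le> 1"
  then have "0 \<le> 1 - l" "0 \<le> l*A" by auto
  moreover have "1 - l > 0 \<or> l*A > 0" using \<open>0<A\<close> \<open>l\<le>1\<close> by (cases "l = 1") auto
  ultimately show ?thesis by linarith
qed

lemma fr_le: "0<y \<Longrightarrow> 0<z \<Longrightarrow> x*z \<le> w*y \<Longrightarrow> x/y \<le> w/(z::real)"
  by (simp add: divide_simps)
lemma fr_less: "0<y \<Longrightarrow> 0<z \<Longrightarrow> x*z < w*y \<Longrightarrow> x/y < w/(z::real)"
  by (simp add: divide_simps)

lemma Jd_cmp: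
  fixes A B a b :: real
  assumes A: "0 < A" and B: "0 < B" and ab: "0 \<le> a" "a \<le> b" "b \<le> 1"
  and P: "(A-1)^2*((1-a+a*B)*(1-b+b*B)) \<le> (B-1)^2*((1-a+a*A)*(1-b+b*A))"
  shows "(A-1)/(1-a+a*A) - (B-1)/(1-a+a*B) \<le> (A-1)/(1-b+b*A) - (B-1)/(1-b+b*B)"
proof -
  have p: "0 < 1-a+a*A" "0 < 1-b+b*A" "0 < 1-a+a*B" "0 < 1-b+b*B"
    using pos_lin ab A B by auto
  have "(A-1)^2/((1-a+a*A)*(1-b+b*A)) \<le> (B-1)^2/((1-a+a*B)*(1-b+b*B))"
    by (rule fr_le[OF mult_pos_pos[OF p(1,2)] mult_pos_pos[OF p(3,4)] P])
  then have "(b-a) * ((B-1)^2/((1-a+a*B)*(1-b+b*B)) - (A-1)^2/((1-a+a*A)*(1-b+b*A))) \<ge> 0"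
    using ab by (intro mult_nonneg_nonneg) auto
  then show ?thesis using Jd_diff[OF p] by linarith
qed

lemma Jd_cmp_strict:
  fixes A B a b :: real
  assumes A: "0 < A" and B: "0 < B" and ab: "0 \<le> a" "a < b" "b \<le> 1"
  and P: "(A-1)^2*((1-a+a*B)*(1-b+b*B)) < (B-1)^2*((1-a+a*A)*(1-b+b*A))"
  shows "(A-1)/(1-a+a*A) - (B-1)/(1-a+a*B) < (A-1)/(1-b+b*A) - (B-1)/(1-b+b*B)"
proof -
  have p: "0 < 1-a+a*A" "0 < 1-b+b*A" "0 < 1-a+a*B" "0 < 1-b+b*B"
    using pos_lin ab A B by auto
  have "(A-1)^2/((1-a+a*A)*(1-b+b*A)) < (B-1)^2/((1-a+a*B)*(1-b+b*B))"
    by (rule fr_less[OF mult_pos_pos[OF p(1,2)] mult_pos_pos[OF p(3,4)] P])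
  then have "(b-a) * ((B-1)^2/((1-a+a*B)*(1-b+b*B)) - (A-1)^2/((1-a+a*A)*(1-b+b*A))) > 0"
    using ab by (intro mult_pos_pos) auto
  then show ?thesis using Jd_diff[OF p] by linarith
qed

lemma Jd_cmp_rev:
  fixes A B a b :: real
  assumes A: "0 < A" and B: "0 < B" and ab: "0 \<le> a" "a \<le> b" "b \<le> 1"
  and P: "(B-1)^2*((1-a+a*A)*(1-b+b*A)) \<le> (A-1)^2*((1-a+a*B)*(1-b+b*B))"
  shows "(A-1)/(1-b+b*A) - (B-1)/(1-b+b*B) \<le> (A-1)/(1-a+a*A) - (B-1)/(1-a+a*B)"
proof -
  have p: "0 < 1-a+a*A" "0 < 1-b+b*A" "0 < 1-a+a*B" "0 < 1-b+b*B"
    using pos_lin ab A B by auto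
  have "(B-1)^2/((1-a+a*B)*(1-b+b*B)) \<le> (A-1)^2/((1-a+a*A)*(1-b+b*A))"
    by (rule fr_le[OF mult_pos_pos[OF p(3,4)] mult_pos_pos[OF p(1,2)] P])
  then have "(b-a) * ((B-1)^2/((1-a+a*B)*(1-b+b*B)) - (A-1)^2/((1-a+a*A)*(1-b+b*A))) \<le> 0"
    using ab by (intro mult_nonneg_nonpos) auto
  then show ?thesis using Jd_diff[OF p] by linarith
qed

lemma Lf_prod:
  fixes A B a b :: real
  assumes A: "0 < A" and B: "0 < B" and ab: "0 \<le> a" "a \<le> 1" "0 \<le> b" "b \<le> 1"
    and "Lf A B a \<ge> 0" "Lf A B b \<ge> 0"
  shows "(A-1)^2*((1-a+a*B)*(1-b+b*B)) \<le> (B-1)^2*((1-a+a*A)*(1-b+b*A))"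
proof -
  have p: "0 < 1-a+a*A" "0 < 1-b+b*A" "0 < 1-a+a*B" "0 < 1-b+b*B"
    using pos_lin ab A B by auto
  have "(\<bar>A-1\<bar>*(1-a+a*B))*(\<bar>A-1\<bar>*(1-b+b*B)) \<le> (\<bar>B-1\<bar>*(1-a+a*A))*(\<bar>B-1\<bar>*(1-b+b*A))"
    apply (rule mult_mono) using assms p by (auto simp: Lf_def)
  then show ?thesis by (simp add: power2_eq_square algebra_simps)
qed

lemma Lf_prod_strict:
  fixes A B a b :: real
  assumes A: "0 < A" and B: "0 < B" and ab: "0 \<le> a" "a \<le> 1" "0 \<le> b" "b \<le> 1"
    and "Lf A B a \<ge> 0" "Lf A B b > 0" "A \<noteq> 1"
  shows "(A-1)^2*((1-a+a*B)*(1-b+b*B)) < (B-1)^2*((1-a+a*A)*(1-b+b*A))"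
proof -
  have p: "0 < 1-a+a*A" "0 < 1-b+b*A" "0 < 1-a+a*B" "0 < 1-b+b*B"
    using pos_lin ab A B by auto
  have "(\<bar>A-1\<bar>*(1-a+a*B))*(\<bar>A-1\<bar>*(1-b+b*B)) < (\<bar>B-1\<bar>*(1-a+a*A))*(\<bar>B-1\<bar>*(1-b+b*A))"
    apply (rule mult_le_less_imp_less) using assms p by (auto simp: Lf_def)
  then show ?thesis by (simp add: power2_eq_square algebra_simps)
qed

lemma Lf_prod_neg:
  fixes A B a b :: real
  assumes A: "0 < A" and B: "0 < B" and ab: "0 \<le> a" "a \<le> 1" "0 \<le> b" "b \<le> 1"
    and "Lf A B a < 0" "Lf A B b < 0"
  shows "(B-1)^2*((1-a+a*A)*(1-b+b*A)) \<le> (A-1)^2*((1-a+a*B)*(1-b+b*B))"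
proof -
  have p: "0 < 1-a+a*A" "0 < 1-b+b*A" "0 < 1-a+a*B" "0 < 1-b+b*B"
    using pos_lin ab A B by auto
  have "(\<bar>B-1\<bar>*(1-a+a*A))*(\<bar>B-1\<bar>*(1-b+b*A)) \<le> (\<bar>A-1\<bar>*(1-a+a*B))*(\<bar>A-1\<bar>*(1-b+b*B))"
    apply (rule mult_mono) using assms p by (auto simp: Lf_def)
  then show ?thesis by (simp add: power2_eq_square algebra_simps)
qed

lemma J_deriv:
  fixes A B x :: real
  assumes "0 < A" "0 < B" "0 \<le> x" "x \<le> 1"
  shows "DERIV (\<lambda>l. ln(1-l+l*A) - ln(1-l+l*B) - l*(ln A - ln B)) x :>
     ((A-1)/(1-x+x*A) - (B-1)/(1-x+x*B) - (ln A - ln B))"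
proof -
  have p: "0 < 1-x+x*A" "0 < 1-x+x*B" using pos_lin assms by auto
  show ?thesis
    by (rule derivative_eq_intros refl | use p in simp)+
qed

lemma J_core:
  fixes A B l :: real
  assumes A: "0 < A" and B: "0 < B" and BA: "B \<le> A"
    and d0: "A - B \<le> ln A - ln B" and l: "0 < l" "l < 1"
    and strict: "B < 1 \<and> 1 < A \<and> A - B < ln A - ln B \<or> \<not> st"
  shows "ln(1-l+l*A) - ln(1-l+l*B) - l*(ln A - ln B) \<le> 0 \<and>
         (st \<longrightarrow> ln(1-l+l*A) - ln(1-l+l*B) - l*(ln A - ln B) < 0)"
proof -
  define J where "J l = ln(1-l+l*A) - ln(1-l+l*B) - l*(ln A - ln B)" for l
  define Jd where "Jd l = (A-1)/(1-l+l*A) - (B-1)/(1-l+l*B) - (ln A - ln B)" for l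
  have der: "DERIV J x :> Jd x" if "0 \<le> x" "x \<le> 1" for x
    unfolding J_def[abs_def] Jd_def using J_deriv[OF A B that] by simp
  have J0: "J 0 = 0" and J1: "J 1 = 0" by (simp_all add: J_def)
  have Jd0: "Jd 0 = (A - B) - (ln A - ln B)" by (simp add: Jd_def)
  obtain x1 where x1: "0 < x1" "x1 < l" "J l - J 0 = (l - 0) * Jd x1"
    using MVT2[of 0 l J Jd] der l by auto
  obtain x2 where x2: "l < x2" "x2 < 1" "J 1 - J l = (1 - l) * Jd x2"
    using MVT2[of l 1 J Jd] der l by auto
  have key: "(st \<longrightarrow> J l < 0) \<and> J l \<le> 0"
  proof (cases "Lf A B x1 < 0")
    case True
    then have "Lf A B 0 < 0" using Lf_mono[OF BA, of 0 x1] x1 by linarith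
    then have "(B-1)^2*((1-0+0*A)*(1-x1+x1*A)) \<le> (A-1)^2*((1-0+0*B)*(1-x1+x1*B))"
      using Lf_prod_neg[OF A B, of 0 x1] True x1 l by simp
    then have "Jd x1 \<le> Jd 0"
      using Jd_cmp_rev[OF A B, of 0 x1] x1 l unfolding Jd_def by simp
    moreover have "Jd 0 \<le> 0" "st \<longrightarrow> Jd 0 < 0" using Jd0 d0 strict by auto
    ultimately have "Jd x1 \<le> 0" "st \<longrightarrow> Jd x1 < 0" by auto
    then show ?thesis using x1 J0 by (auto simp: mult_pos_neg mult_nonneg_nonpos)
  next
    case False
    then have L2: "Lf A B x2 \<ge> 0" using Lf_mono[OF BA, of x1 x2] x1 x2 by linarith
    have "(A-1)^2*((1-x1+x1*B)*(1-x2+x2*B)) \<le> (B-1)^2*((1-x1+x1*A)*(1-x2+x2*A))"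
      using Lf_prod[OF A B, of x1 x2] False L2 x1 x2 l by simp
    then have c: "Jd x1 \<le> Jd x2"
      using Jd_cmp[OF A B, of x1 x2] x1 x2 l unfolding Jd_def by simp
    have c2: "st \<longrightarrow> Jd x1 < Jd x2"
    proof
      assume st
      with strict have s: "B < 1" "1 < A" by auto
      have "Lf A B x2 > 0" using Lf_strict_mono[OF s, of x1 x2] False x1 x2 l by linarith
      then have "(A-1)^2*((1-x1+x1*B)*(1-x2+x2*B)) < (B-1)^2*((1-x1+x1*A)*(1-x2+x2*A))"
        using Lf_prod_strict[OF A B, of x1 x2] False s x1 x2 l by simp
      then show "Jd x1 < Jd x2"
        using Jd_cmp_strict[OF A B, of x1 x2] x1 x2 l unfolding Jd_def by simp
    qed
    show ?thesis
    proof (intro conjI impI)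
      show "J l \<le> 0"
      proof (rule ccontr)
        assume "\<not> J l \<le> 0"
        then have "Jd x1 > 0" using x1 J0 l by (smt (verit) mult_nonneg_nonpos)
        moreover have "Jd x2 < 0" using x2 J1 \<open>\<not> J l \<le> 0\<close> l
          by (smt (verit) mult_nonneg_nonneg)
        ultimately show False using c by linarith
      qed
      assume st
      show "J l < 0"
      proof (rule ccontr)
        assume "\<not> J l < 0"
        then have "Jd x1 \<ge> 0" using x1 J0 l by (smt (verit) mult_pos_neg)
        moreover have "Jd x2 \<le> 0" using x2 J1 \<open>\<not> J l < 0\<close> l
          by (smt (verit) mult_pos_pos)
        ultimately show False using c2 \<open>st\<close> by linarith
      qed
    qed
  qed
  then show ?thesis unfolding J_def by auto
qed



lemma skl_pos: "0 < p \<Longrightarrow> 0 < q \<Longrightarrow> skl_term p q = ereal ((p - q) * ln (p / q))"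
  by (simp add: skl_term_def)

lemma pair_id:
  fixes a b :: real assumes "0 < a" "0 < b"
  shows "(a/2 - 1/2*(a/2 + b/2)) * ln ((a/2) / (1/2*(a/2 + b/2))) +
         (b/2 - 1/2*(a/2 + b/2)) * ln ((b/2) / (1/2*(a/2 + b/2)))
       = (a - b)/4 * (ln a - ln b)"
proof -
  have e1: "(a/2) / (1/2*(a/2 + b/2)) = 2*a/(a+b)" using assms by (simp add: field_simps)
  have e2: "(b/2) / (1/2*(a/2 + b/2)) = 2*b/(a+b)" using assms by (simp add: field_simps)
  have l1: "ln (2*a/(a+b)) = ln 2 + ln a - ln (a+b)" using assms by (simp add: ln_div ln_mult)
  have l2: "ln (2*b/(a+b)) = ln 2 + ln b - ln (a+b)" using assms by (simp add: ln_div ln_mult)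
  show ?thesis unfolding e1 e2 l1 l2 by (simp add: algebra_simps)
qed

lemma sumbool: "(\<Sum>x\<in>(UNIV::bool set). f x) = f True + f False"
  by (simp add: UNIV_bool add.commute)

lemma C_SKL_pos:
  fixes P :: "bool \<Rightarrow> 'b::finite \<Rightarrow> real"
  assumes pos: "\<And>x y. 0 < P x y"
  shows "C_SKL P = ereal (\<Sum>y\<in>UNIV. (P True y - P False y)/4 * (ln (P True y) - ln (P False y)))"
proof -
  have "C_SKL P = (\<Sum>x\<in>UNIV. \<Sum>y\<in>UNIV. ereal ((P x y/2 - 1/2*(P True y/2 + P False y/2)) *
          ln ((P x y/2) / (1/2*(P True y/2 + P False y/2)))))"
  proof -
    have q: "\<And>y. (\<Sum>x'\<in>UNIV. P x' y/2) = P True y/2 + P False y/2" by (simp add: UNIV_bool)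
    show ?thesis unfolding C_SKL_def q
      by (intro sum.cong refl skl_pos) (auto simp: pos add_pos_pos)
  qed
  also have "\<dots> = ereal (\<Sum>y\<in>UNIV. \<Sum>x\<in>UNIV. (P x y/2 - 1/2*(P True y/2 + P False y/2)) *
          ln ((P x y/2) / (1/2*(P True y/2 + P False y/2))))"
    by (subst sum.swap) (simp add: sum_ereal)
  also have "\<dots> = ereal (\<Sum>y\<in>UNIV. (P True y - P False y)/4 * (ln (P True y) - ln (P False y)))"
    by (intro arg_cong[where f=ereal] sum.cong refl, simp only: sumbool, rule pair_id[OF pos pos])
  finally show ?thesis .
qed

lemma C_BSC:
  assumes "0 < d" "d < 1"
  shows "C_SKL (BSC d) = ereal ((1 - 2*d)/2 * (ln (1-d) - ln d))"
  using assms by (subst C_SKL_pos) (auto simp: BSC_def UNIV_bool algebra_simps)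

lemma C_BSC0: "C_SKL (BSC 0) = \<infinity>"
  by (simp add: C_SKL_def BSC_def skl_term_def UNIV_bool)

lemma comp_formula:
  "chan_comp (chan_prod (BSC d1) (BSC d2)) (B3 lam) y z =
     (1 - lam)/4 + lam * BSC d1 y (fst z) * BSC d2 y (snd z)"
  by (cases y; cases z) (auto simp: chan_comp_def chan_prod_def B3_def BSC_def UNIV_Times_UNIV[symmetric] UNIV_bool field_simps)



lemma g_strict:
  fixes d1 d2 :: real
  assumes "0 < d1" "d1 < d2" "d2 \<le> 1/2"
  shows "ln (1-d2) - ln d2 + 4*d2 < ln (1-d1) - ln d1 + 4*d1"
proof -
  have der: "DERIV (\<lambda>x. ln (1-x) - ln x + 4*x) x :> (-1/(1-x) - 1/x + 4)" if "d1 \<le> x" "x \<le> d2" for x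
  proof -
    have "0 < x" "x < 1" using that assms by auto
    then show ?thesis
      by (auto intro!: derivative_eq_intros)
  qed
  obtain z where z: "d1 < z" "z < d2"
    "(ln (1-d2) - ln d2 + 4*d2) - (ln (1-d1) - ln d1 + 4*d1) = (d2 - d1) * (-1/(1-z) - 1/z + 4)"
    using MVT2[OF assms(2) der] by blast
  have zp: "0 < z" "z < 1/2" using z assms by auto
  have "z*(1-z) < 1/4"
  proof -
    have "0 < (z - 1/2)^2" using zp by simp
    then show ?thesis by (simp add: power2_eq_square algebra_simps)
  qed
  then have "4 < 1/(z*(1-z))" using zp by (simp add: field_simps)
  also have "1/(z*(1-z)) = 1/(1-z) + 1/z" using zp by (simp add: field_simps)
  finally have "-1/(1-z) - 1/z + 4 < 0" by simp
  then have "(d2 - d1) * (-1/(1-z) - 1/z + 4) < 0" using z by (simp add: mult_pos_neg)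
  then show ?thesis using z(3) by linarith
qed

lemma g_le:
  fixes d1 d2 :: real
  assumes "0 < d1" "d1 \<le> d2" "d2 \<le> 1/2"
  shows "ln (1-d2) - ln d2 + 4*d2 \<le> ln (1-d1) - ln d1 + 4*d1"
  using g_strict[of d1 d2] assms by (cases "d1 = d2") auto

lemma F_ineq:
  fixes d :: real
  assumes "0 < d" "d \<le> 1/2"
  shows "2*(1-2*d) \<le> ln (1-d) - ln d" "d < 1/2 \<Longrightarrow> 2*(1-2*d) < ln (1-d) - ln d"
proof -
  have h: "ln (1 - 1/2) - ln (1/2::real) + 4*(1/2) = 2" by simp
  have "2 \<le> ln (1-d) - ln d + 4*d" using g_le[OF assms(1,2) order_refl] by simp
  then show "2*(1-2*d) \<le> ln (1-d) - ln d" by (simp add: algebra_simps)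
  assume "d < 1/2"
  then have "2 < ln (1-d) - ln d + 4*d" using g_strict[OF assms(1) _ order_refl] by simp
  then show "2*(1-2*d) < ln (1-d) - ln d" by (simp add: algebra_simps)
qed

lemma PL:
  fixes A B l :: real
  assumes A: "0 < A" and B: "0 < B" and h: "\<bar>A - B\<bar> \<le> \<bar>ln A - ln B\<bar>" and l: "0 \<le> l" "l \<le> 1"
  shows "(A-B)*(ln(1-l+l*A) - ln(1-l+l*B)) \<le> l*((A-B)*(ln A - ln B))"
proof -
  consider "l = 0" | "l = 1" | "0 < l" "l < 1" using l by linarith
  then show ?thesis
  proof cases
    case 3
    show ?thesis
    proof (cases "B \<le> A")
      case True
      then have "ln B \<le> ln A" using B by simp
      then have d0: "A - B \<le> ln A - ln B" using h True by simp
      have "ln(1-l+l*A) - ln(1-l+l*B) - l*(ln A - ln B) \<le> 0"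
        using J_core[OF A B True d0 3, of False] by simp
      then have "(A-B)*(ln(1-l+l*A) - ln(1-l+l*B)) \<le> (A-B)*(l*(ln A - ln B))"
        using True by (intro mult_left_mono) auto
      then show ?thesis by (simp add: algebra_simps)
    next
      case False
      then have "ln A \<le> ln B" using A by simp
      then have d0: "B - A \<le> ln B - ln A" using h False by simp
      have "ln(1-l+l*B) - ln(1-l+l*A) - l*(ln B - ln A) \<le> 0"
        using J_core[OF B A _ d0 3, of False] False by simp
      then have "(B-A)*(ln(1-l+l*B) - ln(1-l+l*A)) \<le> (B-A)*(l*(ln B - ln A))"
        using False by (intro mult_left_mono) auto
      then show ?thesis by (simp add: algebra_simps)
    qed
  qed auto
qed

lemma PL_strict:
  fixes A B l :: real
  assumes A: "1 < A" and B: "0 < B" "B < 1" and h: "A - B < ln A - ln B" and l: "0 < l" "l < 1"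
  shows "(A-B)*(ln(1-l+l*A) - ln(1-l+l*B)) < l*((A-B)*(ln A - ln B))"
proof -
  have "ln(1-l+l*A) - ln(1-l+l*B) - l*(ln A - ln B) < 0"
    using J_core[of A B l True] assms by simp
  moreover have "A - B > 0" using assms by simp
  ultimately have "(A-B)*(ln(1-l+l*A) - ln(1-l+l*B)) < (A-B)*(l*(ln A - ln B))"
    by (intro mult_strict_left_mono) auto
  then show ?thesis by (simp add: algebra_simps)
qed



definition Ccomp :: "real \<Rightarrow> real \<Rightarrow> real \<Rightarrow> real" where
  "Ccomp lam d1 d2 = (1/2) * (
     (((1-lam)/4 + lam*(1-d1)*(1-d2)) - ((1-lam)/4 + lam*d1*d2)) *
       (ln ((1-lam)/4 + lam*(1-d1)*(1-d2)) - ln ((1-lam)/4 + lam*d1*d2)) +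
     (((1-lam)/4 + lam*(1-d1)*d2) - ((1-lam)/4 + lam*d1*(1-d2))) *
       (ln ((1-lam)/4 + lam*(1-d1)*d2) - ln ((1-lam)/4 + lam*d1*(1-d2))))"

lemma sumbool2: "(\<Sum>z\<in>(UNIV::(bool\<times>bool) set). f z) = f (True,True) + f (True,False) + f (False,True) + f (False,False)"
proof -
  have U: "(UNIV::(bool\<times>bool) set) = {(True,True),(True,False),(False,True),(False,False)}"
    by (auto intro: bool.exhaust)
  show ?thesis unfolding U by (simp add: add.assoc)
qed

lemma alg4: "(a-b)/4*(x-y) + (c-d)/4*(z-w) + (d-c)/4*(w-z) + (b-a)/4*(y-x) = 1/2*((a-b)*(x-y) + (c-d)*(z-w::real))"
  by (simp add: algebra_simps)

lemma comp_C:
  assumes pos: "\<And>y z. 0 < chan_comp (chan_prod (BSC d1) (BSC d2)) (B3 lam) y z"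
  shows "C_SKL (chan_comp (chan_prod (BSC d1) (BSC d2)) (B3 lam)) = ereal (Ccomp lam d1 d2)"
proof -
  have "C_SKL (chan_comp (chan_prod (BSC d1) (BSC d2)) (B3 lam)) = ereal (\<Sum>z\<in>UNIV.
     (chan_comp (chan_prod (BSC d1) (BSC d2)) (B3 lam) True z - chan_comp (chan_prod (BSC d1) (BSC d2)) (B3 lam) False z) / 4 *
     (ln (chan_comp (chan_prod (BSC d1) (BSC d2)) (B3 lam) True z) - ln (chan_comp (chan_prod (BSC d1) (BSC d2)) (B3 lam) False z)))"
    by (rule C_SKL_pos[OF pos])
  also have "\<dots> = ereal (Ccomp lam d1 d2)"
    unfolding sumbool2 comp_formula Ccomp_def
    apply (simp only: BSC_def fst_conv snd_conv if_True if_False simp_thms)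
    apply (rule arg_cong[where f=ereal])
    apply (rule alg4)
    done
  finally show ?thesis .
qed

lemma ln_lin4:
  fixes A lam :: real
  assumes "0 < A" "0 \<le> lam" "lam \<le> 1"
  shows "ln ((1-lam)/4 + lam*(A/4)) = ln (1-lam+lam*A) - ln 4"
proof -
  have eq: "(1-lam)/4 + lam*(A/4) = (1-lam+lam*A)/4" by (simp add: field_simps)
  show ?thesis unfolding eq by (rule ln_divide_pos[OF pos_lin[OF assms]]) simp
qed

lemma term_id:
  fixes A B lam :: real
  assumes "0 < A" "0 < B" "0 \<le> lam" "lam \<le> 1"
  shows "(((1-lam)/4 + lam*(A/4)) - ((1-lam)/4 + lam*(B/4))) *
         (ln ((1-lam)/4 + lam*(A/4)) - ln ((1-lam)/4 + lam*(B/4)))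
       = lam/4 * ((A-B)*(ln(1-lam+lam*A) - ln(1-lam+lam*B)))"
  unfolding ln_lin4[OF assms(1,3,4)] ln_lin4[OF assms(2,3,4)] by (simp add: algebra_simps)

lemma main_real:
  fixes lam d1 d2 :: real
  assumes l: "0 \<le> lam" "lam \<le> 1" and d: "0 < d1" "d1 \<le> 1/2" "0 < d2" "d2 \<le> 1/2"
  shows "Ccomp lam d1 d2 \<le> lam^2 * ((1-2*d1)/2*(ln(1-d1) - ln d1) + (1-2*d2)/2*(ln(1-d2) - ln d2))"
    and "0 < lam \<Longrightarrow> lam < 1 \<Longrightarrow> min d1 d2 < 1/2 \<Longrightarrow>
         Ccomp lam d1 d2 < lam^2 * ((1-2*d1)/2*(ln(1-d1) - ln d1) + (1-2*d2)/2*(ln(1-d2) - ln d2))"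
proof -
  define A where "A = 4*((1-d1)*(1-d2))"
  define B where "B = 4*(d1*d2)"
  define A' where "A' = 4*((1-d1)*d2)"
  define B' where "B' = 4*(d1*(1-d2))"
  define l1 where "l1 = ln(1-d1) - ln d1"
  define l2 where "l2 = ln(1-d2) - ln d2"
  have p: "0 < 1-d1" "0 < 1-d2" using d by auto
  have Ap: "0 < A" "0 < B" "0 < A'" "0 < B'" unfolding A_def B_def A'_def B'_def using p d by auto
  have lnAB: "ln A - ln B = l1 + l2" unfolding A_def B_def l1_def l2_def
    using p d by (simp add: ln_mult)
  have lnAB': "ln A' - ln B' = l1 - l2" unfolding A'_def B'_def l1_def l2_def
    using p d by (simp add: ln_mult)
  have AB: "A - B = 4*(1-d1-d2)" unfolding A_def B_def by (simp add: algebra_simps)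
  have AB': "A' - B' = 4*(d2-d1)" unfolding A'_def B'_def by (simp add: algebra_simps)
  have F1: "2*(1-2*d1) \<le> l1" and F2: "2*(1-2*d2) \<le> l2" unfolding l1_def l2_def using F_ineq d by auto
  have h1: "\<bar>A - B\<bar> \<le> \<bar>ln A - ln B\<bar>" unfolding lnAB AB using F1 F2 d by simp
  have h2: "\<bar>A' - B'\<bar> \<le> \<bar>ln A' - ln B'\<bar>"
  proof (cases "d1 \<le> d2")
    case True
    then have "l2 + 4*d2 \<le> l1 + 4*d1" unfolding l1_def l2_def using g_le[of d1 d2] d by simp
    then show ?thesis unfolding lnAB' AB' using True by simp
  next
    case False
    then have "l1 + 4*d1 \<le> l2 + 4*d2" unfolding l1_def l2_def using g_le[of d2 d1] d by simp
    then show ?thesis unfolding lnAB' AB' using False by simp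
  qed
  have C_eq: "Ccomp lam d1 d2 = 1/2 * (lam/4 * ((A-B)*(ln(1-lam+lam*A) - ln(1-lam+lam*B))) +
                                      lam/4 * ((A'-B')*(ln(1-lam+lam*A') - ln(1-lam+lam*B'))))"
  proof -
    have e: "lam*(1-d1)*(1-d2) = lam*(A/4)" "lam*d1*d2 = lam*(B/4)" "lam*(1-d1)*d2 = lam*(A'/4)" "lam*d1*(1-d2) = lam*(B'/4)"
      unfolding A_def B_def A'_def B'_def by simp_all
    show ?thesis unfolding Ccomp_def e term_id[OF Ap(1,2) l] term_id[OF Ap(3,4) l] ..
  qed
  have R_eq: "lam^2 * ((1-2*d1)/2*(ln(1-d1) - ln d1) + (1-2*d2)/2*(ln(1-d2) - ln d2))
      = 1/2 * (lam/4 * (lam*((A-B)*(ln A - ln B))) + lam/4 * (lam*((A'-B')*(ln A' - ln B'))))"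
    unfolding lnAB lnAB' AB AB' l1_def[symmetric] l2_def[symmetric]
    by (simp add: field_simps power2_eq_square)
  have P1: "(A-B)*(ln(1-lam+lam*A) - ln(1-lam+lam*B)) \<le> lam*((A-B)*(ln A - ln B))"
    by (rule PL[OF Ap(1,2) h1 l])
  have P2: "(A'-B')*(ln(1-lam+lam*A') - ln(1-lam+lam*B')) \<le> lam*((A'-B')*(ln A' - ln B'))"
    by (rule PL[OF Ap(3,4) h2 l])
  have q: "0 \<le> lam/4" using l by simp
  show "Ccomp lam d1 d2 \<le> lam^2 * ((1-2*d1)/2*(ln(1-d1) - ln d1) + (1-2*d2)/2*(ln(1-d2) - ln d2))"
    unfolding C_eq R_eq by (rule mult_left_mono[OF add_mono[OF mult_left_mono[OF P1 q] mult_left_mono[OF P2 q]]]) simp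
  assume s: "0 < lam" "lam < 1" "min d1 d2 < 1/2"
  have "2*(1-2*d1) < l1 \<or> 2*(1-2*d2) < l2" unfolding l1_def l2_def using F_ineq d s(3)
    by (cases "d1 < 1/2") auto
  then have h1s: "A - B < ln A - ln B" unfolding lnAB AB using F1 F2 by (elim disjE) (simp_all add: algebra_simps)
  have AB1: "1 < A \<and> B < 1"
  proof (cases "d1 < 1/2")
    case True
    have "1/2 < 1-d1" "1/2 \<le> 1-d2" using True d by auto
    then have "1/2*(1/2) < (1-d1)*(1-d2)" by (intro mult_less_le_imp_less) auto
    moreover have "d1*d2 < 1/2*(1/2)" using True d by (intro mult_less_le_imp_less) auto
    ultimately show ?thesis unfolding A_def B_def by simp
  next
    case False
    then have True: "d2 < 1/2" using s(3) by simp
    have "1/2 \<le> 1-d1" "1/2 < 1-d2" using True d by auto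
    then have "1/2*(1/2) < (1-d1)*(1-d2)" by (intro mult_le_less_imp_less) auto
    moreover have "d1*d2 < 1/2*(1/2)" using True d by (intro mult_le_less_imp_less) auto
    ultimately show ?thesis unfolding A_def B_def by simp
  qed
  have P1s: "(A-B)*(ln(1-lam+lam*A) - ln(1-lam+lam*B)) < lam*((A-B)*(ln A - ln B))"
    using PL_strict[of A B lam] AB1 Ap h1s s by simp
  have qs: "0 < lam/4" using s by simp
  show "Ccomp lam d1 d2 < lam^2 * ((1-2*d1)/2*(ln(1-d1) - ln d1) + (1-2*d2)/2*(ln(1-d2) - ln d2))"
    unfolding C_eq R_eq by (rule mult_strict_left_mono[OF add_less_le_mono[OF mult_strict_left_mono[OF P1s qs] mult_left_mono[OF P2 q]]]) simp
qed


lemma comp_pos: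
  fixes lam d1 d2 :: real
  assumes l: "0 \<le> lam" "lam \<le> 1" and d: "0 \<le> d1" "d1 \<le> 1/2" "0 \<le> d2" "d2 \<le> 1/2"
    and h: "lam < 1 \<or> (0 < d1 \<and> 0 < d2)"
  shows "0 < chan_comp (chan_prod (BSC d1) (BSC d2)) (B3 lam) y z"
proof -
  have b1: "0 \<le> BSC d1 y (fst z)" "0 \<le> BSC d2 y (snd z)" using d by (auto simp: BSC_def)
  have "0 \<le> lam * BSC d1 y (fst z) * BSC d2 y (snd z)" using b1 l by simp
  moreover have "0 < (1-lam)/4 \<or> 0 < lam * BSC d1 y (fst z) * BSC d2 y (snd z)"
  proof (cases "lam < 1")
    case False
    then have "lam = 1" using l by simp
    moreover have "0 < BSC d1 y (fst z)" "0 < BSC d2 y (snd z)" using d h False by (auto simp: BSC_def)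
    ultimately show ?thesis by simp
  qed simp
  moreover have "0 \<le> (1-lam)/4" using l by simp
  ultimately show ?thesis unfolding comp_formula by (elim disjE; linarith)
qed

lemma C_BSC_nonneg:
  fixes d :: real
  assumes "0 < d" "d \<le> 1/2"
  shows "0 \<le> (1 - 2*d)/2 * (ln (1-d) - ln d)"
proof -
  have "ln d \<le> ln (1-d)" using assms by simp
  then show ?thesis using assms by simp
qed

theorem mainTheorem9:
  fixes lam \<Delta>1 \<Delta>2 :: real
  assumes "0 \<le> lam" "lam \<le> 1"
    and "0 \<le> \<Delta>1" "\<Delta>1 \<le> 1/2" "0 \<le> \<Delta>2" "\<Delta>2 \<le> 1/2"
  shows "C_SKL (chan_comp (chan_prod (BSC \<Delta>1) (BSC \<Delta>2)) (B3 lam))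
           \<le> ereal (lam ^ 2) * (C_SKL (BSC \<Delta>1) + C_SKL (BSC \<Delta>2)) \<and>
         (0 < lam \<and> lam < 1 \<and> min \<Delta>1 \<Delta>2 < 1/2 \<longrightarrow>
         C_SKL (chan_comp (chan_prod (BSC \<Delta>1) (BSC \<Delta>2)) (B3 lam))
           < ereal (lam ^ 2) * (C_SKL (BSC \<Delta>1) + C_SKL (BSC \<Delta>2)))"
proof -
  note a = assms
  have CB: "C_SKL (BSC d) = (if d = 0 then \<infinity> else ereal ((1 - 2*d)/2 * (ln (1-d) - ln d)))"
    if "0 \<le> d" "d \<le> 1/2" for d :: real
    using that C_BSC[of d] C_BSC0 by auto
  consider "lam = 0" | "0 < lam" "\<Delta>1 = 0 \<or> \<Delta>2 = 0" | "0 < lam" "0 < \<Delta>1" "0 < \<Delta>2"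
    using a by linarith
  then show ?thesis
  proof cases
    case 1
    have "C_SKL (chan_comp (chan_prod (BSC \<Delta>1) (BSC \<Delta>2)) (B3 lam)) = ereal (Ccomp lam \<Delta>1 \<Delta>2)"
      by (rule comp_C, rule comp_pos) (use a 1 in auto)
    also have "\<dots> = 0" using 1 by (simp add: Ccomp_def zero_ereal_def)
    finally show ?thesis using 1 by (simp add: zero_ereal_def[symmetric])
  next
    case 2
    have inf: "C_SKL (BSC \<Delta>1) + C_SKL (BSC \<Delta>2) = \<infinity>"
      using 2(2) CB[of \<Delta>1] CB[of \<Delta>2] a by auto
    have rhs: "ereal (lam ^ 2) * (C_SKL (BSC \<Delta>1) + C_SKL (BSC \<Delta>2)) = \<infinity>"
      unfolding inf using 2(1) by simp
    have "lam < 1 \<longrightarrow> C_SKL (chan_comp (chan_prod (BSC \<Delta>1) (BSC \<Delta>2)) (B3 lam)) = ereal (Ccomp lam \<Delta>1 \<Delta>2)"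
      using comp_C comp_pos a by blast
    then show ?thesis unfolding rhs by auto
  next
    case 3
    have lhs: "C_SKL (chan_comp (chan_prod (BSC \<Delta>1) (BSC \<Delta>2)) (B3 lam)) = ereal (Ccomp lam \<Delta>1 \<Delta>2)"
      by (rule comp_C, rule comp_pos) (use a 3 in auto)
    have rhs: "ereal (lam ^ 2) * (C_SKL (BSC \<Delta>1) + C_SKL (BSC \<Delta>2)) =
       ereal (lam^2 * ((1-2*\<Delta>1)/2*(ln(1-\<Delta>1) - ln \<Delta>1) + (1-2*\<Delta>2)/2*(ln(1-\<Delta>2) - ln \<Delta>2)))"
      using CB[of \<Delta>1] CB[of \<Delta>2] a 3 by simp
    show ?thesis unfolding lhs rhs using main_real[of lam \<Delta>1 \<Delta>2] a 3 by auto
  qed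
qed

end
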